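(* Let $m\in\mathbb{N}$ with $m\ge1$. (a) If $m$ is odd, then $F_m$ is $\mathbb{Z}_m$-cordial. Moreover, $F_n$ is $\mathbb{Z}_m$-cordial for all $n\in\mathbb{N}$ if and only if $F_1,F_2,\ldots,F_{m-1}$ are $\mathbb{Z}_m$-cordial. (b) If $m$ is even, then $F_{2m}$ is $\mathbb{Z}_m$-cordial. Moreover, $F_n$ is $\mathbb{Z}_m$-cordial for all $n\in\mathbb{N}$ if and only if $F_1,F_2,\ldots,F_{2m-1}$ are $\mathbb{Z}_m$-cordial. (c) If $m$ is even but $4\nmid m$, then $F_m$ is not $\mathbb{Z}_m$-cordial.
   Context: $\mathbb{N}=\mathbb{Z}_{\ge0}$. Graphs are finite, simple and undirected. For $n\in\mathbb{N}$, the friendship graph $F_n$ is the union of $n$ copies of the triangle $C_3$ joined at a single common (central) vertex. For an abelian group $A$ and a graph $G=(V,E)$, a vertex labeling $\ell:V\to A$ induces an edge labeling $\ell(\{v_1,v_2\})=\ell(v_1)+\ell(v_2)$. Let $f_V(a)=|\{v\in V:\ell(v)=a\}|$ and $f_E(a)=|\{e\in E:\ell(e)=a\}|$. The labeling is $A$-cordial if $|f_V(a_1)-f_V(a_2)|\le 1$ and $|f_E(a_1)-f_E(a_2)|\le 1$ for all $a_1,a_2\in A$; $G$ is $A$-cordial if it admits an $A$-cordial labeling. *)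

theory Defs
  imports Main
begin

text \<open>A finite simple graph is given by a vertex set V and a set E of 2-element
  subsets of V. The group Z_m is represented by the residues {0..<m} with addition mod m.\<close>

definition vcount :: "nat set \<Rightarrow> (nat \<Rightarrow> nat) \<Rightarrow> nat \<Rightarrow> nat" where
  "vcount V l a = card {v \<in> V. l v = a}"

definition edge_label :: "nat \<Rightarrow> (nat \<Rightarrow> nat) \<Rightarrow> nat set \<Rightarrow> nat" where
  "edge_label m l e = (\<Sum>v\<in>e. l v) mod m"

definition ecount :: "nat \<Rightarrow> nat set set \<Rightarrow> (nat \<Rightarrow> nat) \<Rightarrow> nat \<Rightarrow> nat" where
  "ecount m E l a = card {e \<in> E. edge_label m l e = a}"

definition Zm_cordial_labeling :: "nat \<Rightarrow> nat set \<Rightarrow> nat set set \<Rightarrow> (nat \<Rightarrow> nat) \<Rightarrow> bool" where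
  "Zm_cordial_labeling m V E l \<longleftrightarrow>
     (\<forall>v\<in>V. l v < m) \<and>
     (\<forall>a1<m. \<forall>a2<m. \<bar>int (vcount V l a1) - int (vcount V l a2)\<bar> \<le> 1) \<and>
     (\<forall>a1<m. \<forall>a2<m. \<bar>int (ecount m E l a1) - int (ecount m E l a2)\<bar> \<le> 1)"

definition Zm_cordial :: "nat \<Rightarrow> nat set \<Rightarrow> nat set set \<Rightarrow> bool" where
  "Zm_cordial m V E \<longleftrightarrow> (\<exists>l. Zm_cordial_labeling m V E l)"

text \<open>Friendship graph F_n: centre 0, triangles {0, 2k-1, 2k} for k = 1..n.\<close>

definition friendship_V :: "nat \<Rightarrow> nat set" where
  "friendship_V n = {0..2*n}"

definition friendship_E :: "nat \<Rightarrow> nat set set" where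
  "friendship_E n = {{0, i} | i. 1 \<le> i \<and> i \<le> 2*n} \<union> {{2*k - 1, 2*k} | k. 1 \<le> k \<and> k \<le> n}"

definition friendship_Zm_cordial :: "nat \<Rightarrow> nat \<Rightarrow> bool" where
  "friendship_Zm_cordial m n \<longleftrightarrow> Zm_cordial m (friendship_V n) (friendship_E n)"

end

theory Submission imports Defs "HOL-Number_Theory.Cong" begin

lemma E_Suc: "friendship_E (Suc n) = insert {0,2*n+1} (insert {0,2*n+2} (insert {2*n+1,2*n+2} (friendship_E n)))"
proof -
  have a: "{{0, i} | i. 1 \<le> i \<and> i \<le> 2*Suc n} = insert {0,2*n+1} (insert {0,2*n+2} {{0, i} | i. 1 \<le> i \<and> i \<le> 2*n})"
    by (auto simp: le_Suc_eq)
  have b: "{{2*k - 1, 2*k} | k. 1 \<le> k \<and> k \<le> Suc n} = insert {2*n+1,2*n+2} {{2*k - 1, 2*k} | k. 1 \<le> k \<and> k \<le> n}"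
  proof -
    have "{2*Suc n - 1, 2*Suc n} = {2*n+1,2*n+2}" by auto
    then show ?thesis apply (auto simp: le_Suc_eq) apply (rule exI[of _ "Suc n"]) by auto
  qed
  show ?thesis unfolding friendship_E_def a b by auto
qed

lemma E_sub: "e \<in> friendship_E n \<Longrightarrow> e \<subseteq> {0..2*n}"
  unfolding friendship_E_def by auto

lemma E_fin: "finite (friendship_E n)"
proof -
  have "friendship_E n \<subseteq> Pow {0..2*n}" using E_sub by blast
  then show ?thesis by (rule finite_subset) simp
qed

lemma E_0: "friendship_E 0 = {}"
  unfolding friendship_E_def by auto

lemma sum_E_Suc: "(\<Sum>e\<in>friendship_E (Suc n). g e) = (\<Sum>e\<in>friendship_E n. g e) + g {0,2*n+1} + g {0,2*n+2} + g {2*n+1,2*n+2}"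
proof -
  have n1: "{2*n+1,2*n+2} \<notin> friendship_E n" using E_sub by fastforce
  have n2: "{0,2*n+2} \<notin> insert {2*n+1,2*n+2} (friendship_E n)" using E_sub by (auto simp: doubleton_eq_iff) fastforce
  have n3: "{0,2*n+1} \<notin> insert {0,2*n+2} (insert {2*n+1,2*n+2} (friendship_E n))" using E_sub by (auto simp: doubleton_eq_iff) fastforce
  show ?thesis unfolding E_Suc using n1 n2 n3 E_fin by (simp add: algebra_simps)
qed

lemma sum_E_add: "(\<Sum>e\<in>friendship_E (n+p). g e) = (\<Sum>e\<in>friendship_E n. g e) + (\<Sum>k<p. g {0,2*n+2*k+1} + g {0,2*n+2*k+2} + g {2*n+2*k+1,2*n+2*k+2})"
  by (induction p) (simp_all add: sum_E_Suc algebra_simps)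

lemma sum_V_add: "(\<Sum>v\<in>friendship_V (n+p). f v) = (\<Sum>v\<in>friendship_V n. f v) + (\<Sum>k<p. f (2*n+2*k+1) + f (2*n+2*k+2))"
proof (induction p)
  case 0 then show ?case by simp
next
  case (Suc p)
  have "friendship_V (n + Suc p) = {0..Suc (Suc (2*(n+p)))}" unfolding friendship_V_def by simp
  then show ?case using Suc by (simp add: friendship_V_def algebra_simps)
qed

lemma card_sum: "finite A \<Longrightarrow> card {x\<in>A. P x} = (\<Sum>x\<in>A. if P x then 1 else 0)"
  by (simp add: sum.If_cases Int_def conj_commute)



lemma vcount_sum: "vcount (friendship_V n) l a = (\<Sum>v\<in>friendship_V n. if l v = a then 1 else 0)"
  unfolding vcount_def friendship_V_def by (rule card_sum) simp

lemma ecount_sum: "ecount m (friendship_E n) l a = (\<Sum>e\<in>friendship_E n. if edge_label m l e = a then 1 else 0)"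
  unfolding ecount_def by (rule card_sum) (rule E_fin)

lemma extend:
  assumes cord: "Zm_cordial_labeling m (friendship_V n) (friendship_E n) l"
    and xy: "\<forall>k<p. x k < m \<and> y k < m"
    and vc: "\<forall>a<m. (\<Sum>k<p. (if x k = a then 1 else 0) + (if y k = a then 1 else 0)) = (r::nat)"
    and ec: "\<forall>a<m. (\<Sum>k<p. (if (l 0 + x k) mod m = a then 1 else 0) + (if (l 0 + y k) mod m = a then 1 else 0)
                 + (if (x k + y k) mod m = a then 1 else 0)) = (s::nat)"
  shows "Zm_cordial_labeling m (friendship_V (n+p)) (friendship_E (n+p))
           (\<lambda>v. if v \<le> 2*n then l v else if odd (v - 2*n) then x ((v-2*n-1) div 2) else y ((v-2*n-1) div 2))"
    (is "Zm_cordial_labeling m _ _ ?l")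
proof -
  have l1: "?l v = l v" if "v \<le> 2*n" for v using that by simp
  have lx: "?l (2*n+2*k+1) = x k" for k by simp
  have ly: "?l (2*n+2*k+2) = y k" for k
  proof -
    have a: "2*n+2*k+2 - 2*n = 2*(k+1)" by simp
    have b: "2*n+2*k+2 - 2*n - 1 = 2*k+1" by simp
    have c: "(2*k+1) div 2 = k" by simp
    show ?thesis unfolding a b c by simp
  qed
  have vcnt: "vcount (friendship_V (n+p)) ?l a = vcount (friendship_V n) l a + r" if "a < m" for a
  proof -
    have "vcount (friendship_V (n+p)) ?l a = (\<Sum>v\<in>friendship_V n. if ?l v = a then 1 else 0) +
       (\<Sum>k<p. (if x k = a then 1 else 0) + (if y k = a then 1 else 0))"
      unfolding vcount_sum sum_V_add lx ly by simp
    also have "(\<Sum>v\<in>friendship_V n. if ?l v = a then 1 else 0) = vcount (friendship_V n) l a"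
      unfolding vcount_sum by (rule sum.cong) (auto simp: friendship_V_def)
    finally show ?thesis using vc that by simp
  qed
  have el: "edge_label m ?l e = edge_label m l e" if "e \<in> friendship_E n" for e
    unfolding edge_label_def using E_sub[OF that] by (intro arg_cong[where f="\<lambda>t. t mod m"] sum.cong) auto
  have ecnt: "ecount m (friendship_E (n+p)) ?l a = ecount m (friendship_E n) l a + s" if "a < m" for a
  proof -
    have e1: "edge_label m ?l {0, 2*n+2*k+1} = (l 0 + x k) mod m" for k
      unfolding edge_label_def by simp
    have e2: "edge_label m ?l {0, 2*n+2*k+2} = (l 0 + y k) mod m" for k
      unfolding edge_label_def using ly[of k] by simp
    have e3: "edge_label m ?l {2*n+2*k+1, 2*n+2*k+2} = (x k + y k) mod m" for k
      unfolding edge_label_def using ly[of k] lx[of k] by simp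
    have "ecount m (friendship_E (n+p)) ?l a = (\<Sum>e\<in>friendship_E n. if edge_label m ?l e = a then 1 else 0) +
       (\<Sum>k<p. (if (l 0 + x k) mod m = a then 1 else 0) + (if (l 0 + y k) mod m = a then 1 else 0)
                 + (if (x k + y k) mod m = a then 1 else 0))"
      unfolding ecount_sum sum_E_add e1 e2 e3 by simp
    also have "(\<Sum>e\<in>friendship_E n. if edge_label m ?l e = a then 1 else 0) = ecount m (friendship_E n) l a"
      unfolding ecount_sum by (rule sum.cong) (auto simp: el)
    finally show ?thesis using ec that by simp
  qed
  have bnd: "\<forall>v\<in>friendship_V (n+p). ?l v < m"
  proof
    fix v assume v: "v \<in> friendship_V (n+p)"
    show "?l v < m"
    proof (cases "v \<le> 2*n")
      case True
      then show ?thesis using cord v unfolding Zm_cordial_labeling_def friendship_V_def by auto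
    next
      case False
      have "(v-2*n-1) div 2 < p" using False v unfolding friendship_V_def by auto
      then show ?thesis using False xy by auto
    qed
  qed
  show ?thesis
    using cord bnd vcnt ecnt unfolding Zm_cordial_labeling_def by auto
qed

lemma F0: "m \<ge> 1 \<Longrightarrow> friendship_Zm_cordial m 0"
  unfolding friendship_Zm_cordial_def Zm_cordial_def
proof (intro exI[of _ "\<lambda>_. 0"])
  assume m: "m \<ge> 1"
  have v: "vcount (friendship_V 0) (\<lambda>_. 0) a = (if a = 0 then 1 else 0)" for a
    unfolding vcount_def friendship_V_def by auto
  show "Zm_cordial_labeling m (friendship_V 0) (friendship_E 0) (\<lambda>_. 0)"
    unfolding Zm_cordial_labeling_def v using m by (auto simp: ecount_def E_0 friendship_V_def)
qed

lemma periodic: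
  assumes "p \<ge> 1" "P 0" "\<And>n. P n \<Longrightarrow> P (n + p)" "\<forall>n\<in>{1..p-1}. P n"
  shows "P (n::nat)"
proof (induction n rule: less_induct)
  case (less n)
  show ?case
  proof (cases "n < p")
    case True
    then show ?thesis using assms(2,4) by (cases "n = 0") auto
  next
    case False
    then have "P (n - p)" using less assms(1) by simp
    from assms(3)[OF this] show ?thesis using False by simp
  qed
qed

lemma ext_gen:
  assumes "friendship_Zm_cordial m n"
    and xy: "\<forall>k<p. x k < m \<and> y k < m"
    and vc: "\<forall>a<m. (\<Sum>k<p. (if x k = a then 1 else 0) + (if y k = a then 1 else 0)) = (r::nat)"
    and ec: "\<forall>c a. a<m \<longrightarrow> (\<Sum>k<p. (if (c + x k) mod m = a then 1 else 0) + (if (c + y k) mod m = a then 1 else 0)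
                 + (if (x k + y k) mod m = a then 1 else 0)) = (s::nat)"
  shows "friendship_Zm_cordial m (n+p)"
  using assms(1) extend[OF _ xy vc] ec unfolding friendship_Zm_cordial_def Zm_cordial_def by blast


lemma L0:
  assumes "inj_on h {..<m}" "h ` {..<m} \<subseteq> {..<m}" "a < (m::nat)"
  shows "(\<Sum>k<m. if h k = a then 1 else 0) = (1::nat)"
proof -
  have "h ` {..<m} = {..<m}" using endo_inj_surj[OF _ assms(2,1)] by simp
  then obtain j where j: "j < m" "h j = a" using assms(3) by (metis imageE lessThan_iff)
  have "(\<Sum>k<m. if h k = a then 1 else 0) = (\<Sum>k<m. if k = j then 1 else (0::nat))"
    using j assms(1) by (intro sum.cong) (auto simp: inj_on_def)
  then show ?thesis using j by simp
qed

lemma L0_add: fixes m :: nat assumes "a < m" shows "(\<Sum>k<m. if (c + k) mod m = a then 1 else 0) = (1::nat)"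
proof (rule L0[OF _ _ assms])
  show "inj_on (\<lambda>k. (c + k) mod m) {..<m}"
  proof (rule inj_onI)
    fix x y assume "x \<in> {..<m}" "y \<in> {..<m}" "(c + x) mod m = (c + y) mod m"
    then show "x = y" using cong_add_lcancel_nat[of c x y m] cong_less_modulus_unique_nat[of x y m]
      by (auto simp: cong_def)
  qed
qed auto

lemma L0_dbl: fixes m :: nat assumes o: "odd m" and a: "a < m" shows "(\<Sum>k<m. if (k + k) mod m = a then 1 else 0) = (1::nat)"
proof (rule L0[OF _ _ a])
  show "inj_on (\<lambda>k. (k + k) mod m) {..<m}"
  proof (rule inj_onI)
    fix x y assume "x \<in> {..<m}" "y \<in> {..<m}" "(x + x) mod m = (y + y) mod m"
    moreover have "coprime 2 m" using o by simp
    ultimately show "x = y" using cong_mult_lcancel_nat[of 2 m x y] cong_less_modulus_unique_nat[of x y m]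
      by (auto simp: cong_def mult_2)
  qed
qed auto

lemma D2: "(\<Sum>k<2*m. f (k div 2)) = (\<Sum>j<(m::nat). f j + f j)"
proof (induction m)
  case (Suc m)
  have e: "2 * Suc m = Suc (Suc (2*m))" by simp
  have "Suc (2*m) div 2 = m" by simp
  then show ?case unfolding e using Suc by (simp add: add_ac)
qed simp

lemma split_add: "(\<Sum>k<m+n. g k) = (\<Sum>k<m. g k) + (\<Sum>k<(n::nat). g (m+k))"
  by (induction n) (simp_all add: add_ac)

lemma M2: "(\<Sum>k<2*m. f (k mod m)) = (\<Sum>j<(m::nat). f j + f j)"
proof -
  have "(\<Sum>k<2*m. f (k mod m)) = (\<Sum>k<m+m. f (k mod m))" by (simp add: mult_2)
  also have "\<dots> = (\<Sum>k<m. f (k mod m)) + (\<Sum>k<m. f ((m+k) mod m))" by (rule split_add)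
  also have "\<dots> = (\<Sum>k<m. f k) + (\<Sum>k<m. f k)" by simp
  finally show ?thesis by (simp add: sum.distrib)
qed

lemma R: "N \<ge> 1 \<Longrightarrow> (\<Sum>k<N. f ((k+1) mod N)) = (\<Sum>k<(N::nat). f k)"
proof -
  assume "N \<ge> 1"
  then obtain M where N: "N = Suc M" by (cases N) auto
  have "(\<Sum>k<Suc M. f ((k+1) mod Suc M)) = (\<Sum>k<M. f ((k+1) mod Suc M)) + f 0" by simp
  also have "(\<Sum>k<M. f ((k+1) mod Suc M)) = (\<Sum>k<M. f (Suc k))" by (intro sum.cong) auto
  finally have "(\<Sum>k<Suc M. f ((k+1) mod Suc M)) = (\<Sum>k<M. f (Suc k)) + f 0" .
  then show ?thesis unfolding N using sum.lessThan_Suc_shift[of f M] by (simp add: add_ac)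
qed

lemma base_id:
  assumes "k < 2*(m::nat)"
  shows "(k div 2 + ((k+1) mod (2*m)) div 2) mod m = k mod m"
proof (cases "k + 1 < 2*m")
  case True
  then have "(k+1) mod (2*m) = k+1" by simp
  moreover have "k div 2 + (k+1) div 2 = k" by presburger
  ultimately show ?thesis by simp
next
  case False
  then have k: "k = 2*m - 1" using assms by simp
  have m: "m \<ge> 1" using assms by simp
  have a: "(k+1) mod (2*m) = 0" using k m by simp
  have b: "k div 2 = m - 1" using k m by presburger
  have c: "k = (m - 1) + m" using k m by simp
  show ?thesis unfolding a b by (subst c) simp
qed

lemma ext_odd:
  assumes "odd m" "friendship_Zm_cordial m n"
  shows "friendship_Zm_cordial m (n+m)"
proof (rule ext_gen[OF assms(2), where x="\<lambda>k. k" and y="\<lambda>k. k" and r=2 and s=3])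
  show "\<forall>a<m. (\<Sum>k<m. (if k = a then 1 else 0) + (if k = a then 1 else 0)) = (2::nat)"
    by (simp add: sum.distrib)
  show "\<forall>c a. a<m \<longrightarrow> (\<Sum>k<m. (if (c + k) mod m = a then 1 else 0) + (if (c + k) mod m = a then 1 else 0)
                 + (if (k + k) mod m = a then 1 else 0)) = (3::nat)"
  proof (intro allI impI)
    fix c a assume a: "a < m"
    show "(\<Sum>k<m. (if (c + k) mod m = a then 1 else 0) + (if (c + k) mod m = a then 1 else 0)
                 + (if (k + k) mod m = a then 1 else 0)) = (3::nat)"
      using L0_add[OF a, of c] L0_dbl[OF assms(1) a] by (simp add: sum.distrib)
  qed
qed simp

lemma ext_all:
  assumes "m \<ge> 1" "friendship_Zm_cordial m n"
  shows "friendship_Zm_cordial m (n+2*m)"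
proof (rule ext_gen[OF assms(2), where x="\<lambda>k. k div 2" and y="\<lambda>k. ((k+1) mod (2*m)) div 2" and r=4 and s=6])
  have N: "2*m \<ge> 1" using assms by simp
  show "\<forall>k<2*m. k div 2 < m \<and> (k + 1) mod (2*m) div 2 < m"
  proof (intro allI impI conjI)
    fix k assume k: "k < 2*m"
    have h: "x < 2*m \<Longrightarrow> x div 2 < m" for x using less_mult_imp_div_less[of x m 2] by (simp add: mult.commute)
    show "k div 2 < m" using h k by simp
    have "(k+1) mod (2*m) < 2*m" using N by simp
    then show "(k+1) mod (2*m) div 2 < m" using h by simp
  qed
  show "\<forall>a<m. (\<Sum>k<2*m. (if k div 2 = a then 1 else 0) + (if ((k+1) mod (2*m)) div 2 = a then 1 else 0)) = (4::nat)"
  proof (intro allI impI)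
    fix a assume a: "a < m"
    have "(\<Sum>k<2*m. (if ((k+1) mod (2*m)) div 2 = a then 1 else 0)) = (\<Sum>k<2*m. (if k div 2 = a then 1 else (0::nat)))"
      using R[OF N, of "\<lambda>z. if z div 2 = a then 1 else (0::nat)"] by simp
    moreover have "(\<Sum>k<2*m. (if k div 2 = a then 1 else (0::nat))) = 2"
      using D2[of "\<lambda>z. if z = a then 1 else (0::nat)" m] a by (simp add: sum.distrib)
    ultimately show "(\<Sum>k<2*m. (if k div 2 = a then 1 else 0) + (if ((k+1) mod (2*m)) div 2 = a then 1 else 0)) = (4::nat)"
      by (simp add: sum.distrib)
  qed
  show "\<forall>c a. a<m \<longrightarrow> (\<Sum>k<2*m. (if (c + k div 2) mod m = a then 1 else 0) + (if (c + ((k+1) mod (2*m)) div 2) mod m = a then 1 else 0)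
                 + (if (k div 2 + ((k+1) mod (2*m)) div 2) mod m = a then 1 else 0)) = (6::nat)"
  proof (intro allI impI)
    fix c a assume a: "a < m"
    have s1: "(\<Sum>k<2*m. (if (c + k div 2) mod m = a then 1 else (0::nat))) = 2"
      using D2[of "\<lambda>z. if (c + z) mod m = a then 1 else (0::nat)" m] L0_add[OF a, of c] by (simp add: sum.distrib)
    have s2: "(\<Sum>k<2*m. (if (c + ((k+1) mod (2*m)) div 2) mod m = a then 1 else (0::nat))) = 2"
      using R[OF N, of "\<lambda>z. if (c + z div 2) mod m = a then 1 else (0::nat)"] s1 by simp
    have "(\<Sum>k<2*m. (if (k div 2 + ((k+1) mod (2*m)) div 2) mod m = a then 1 else (0::nat)))
        = (\<Sum>k<2*m. (if k mod m = a then 1 else (0::nat)))"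
      using base_id by (intro sum.cong) auto
    also have "\<dots> = 2" using M2[of "\<lambda>z. if z = a then 1 else (0::nat)" m] a by (simp add: sum.distrib)
    finally show "(\<Sum>k<2*m. (if (c + k div 2) mod m = a then 1 else 0) + (if (c + ((k+1) mod (2*m)) div 2) mod m = a then 1 else 0)
                 + (if (k div 2 + ((k+1) mod (2*m)) div 2) mod m = a then 1 else 0)) = (6::nat)"
      using s1 s2 by (simp add: sum.distrib)
  qed
qed


lemma all_equal:
  fixes c :: "nat \<Rightarrow> nat"
  assumes d: "\<forall>a1<m. \<forall>a2<m. \<bar>int (c a1) - int (c a2)\<bar> \<le> 1"
    and s: "(\<Sum>a<m. c a) = q * m" and a: "a < m"
  shows "c a = q"
proof (rule ccontr)
  assume ne: "c a \<noteq> q"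
  show False
  proof (cases "c a < q")
    case True
    have "\<forall>b\<in>{..<m}. c b \<le> q"
    proof
      fix b assume "b \<in> {..<m}"
      then have "\<bar>int (c b) - int (c a)\<bar> \<le> 1" using d a by blast
      then show "c b \<le> q" using True by linarith
    qed
    then have "(\<Sum>b<m. c b) < (\<Sum>b<m. q)"
      using a True by (intro sum_strict_mono_ex1) auto
    then show False using s by simp
  next
    case False
    then have F: "c a > q" using ne by simp
    have "\<forall>b\<in>{..<m}. q \<le> c b"
    proof
      fix b assume "b \<in> {..<m}"
      then have "\<bar>int (c b) - int (c a)\<bar> \<le> 1" using d a by blast
      then show "q \<le> c b" using F by linarith
    qed
    then have "(\<Sum>b<m. q) < (\<Sum>b<m. c b)"
      using a F by (intro sum_strict_mono_ex1) auto
    then show False using s by simp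
  qed
qed

lemma twice_gauss0: "2 * (\<Sum>a<m. a) + m = m * (m::nat)"
  by (induction m) (simp_all add: algebra_simps)

lemma partC:
  assumes m1: "m \<ge> 1" and ev: "even m" and n4: "\<not> 4 dvd m"
  shows "\<not> friendship_Zm_cordial m m"
proof
  assume "friendship_Zm_cordial m m"
  then obtain l where cord: "Zm_cordial_labeling m (friendship_V m) (friendship_E m) l"
    unfolding friendship_Zm_cordial_def Zm_cordial_def by blast
  define E where "E = friendship_E m"
  define f where "f e = edge_label m l e" for e
  have Em: "friendship_E (0 + m) = E" by (simp add: E_def)
  have fin: "finite E" unfolding E_def by (rule E_fin)
  have cardE: "card E = 3 * m"
  proof -
    have "card E = (\<Sum>e\<in>friendship_E (0 + m). 1)" unfolding card_eq_sum Em ..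
    also have "\<dots> = 3 * m" unfolding sum_E_add E_0 by simp
    finally show ?thesis .
  qed
  have flt: "f e < m" for e unfolding f_def edge_label_def using m1 by simp
  have ec: "ecount m E l a = (\<Sum>e\<in>E. if f e = a then 1 else 0)" for a
    unfolding E_def f_def by (rule ecount_sum)
  have part: "(\<Sum>a<m. ecount m E l a) = 3 * m"
  proof -
    have "(\<Sum>a<m. ecount m E l a) = (\<Sum>e\<in>E. \<Sum>a<m. if f e = a then 1 else 0)"
      unfolding ec by (rule sum.swap)
    also have "\<dots> = (\<Sum>e\<in>E. 1)" using flt by (intro sum.cong) auto
    finally show ?thesis using cardE by simp
  qed
  have three: "ecount m E l a = 3" if "a < m" for a
    using all_equal[of m "ecount m E l" 3 a] cord part that unfolding Zm_cordial_labeling_def E_def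
    by (simp add: mult.commute)
  have weighted: "(\<Sum>e\<in>E. f e) = 3 * (\<Sum>a<m. a)"
  proof -
    have "(\<Sum>e\<in>E. f e) = (\<Sum>e\<in>E. \<Sum>a<m. if f e = a then a else 0)"
      using flt by (intro sum.cong) auto
    also have "\<dots> = (\<Sum>a<m. \<Sum>e\<in>E. if f e = a then a else 0)" by (rule sum.swap)
    also have "\<dots> = (\<Sum>a<m. a * ecount m E l a)"
    proof (intro sum.cong refl)
      fix a show "(\<Sum>e\<in>E. if f e = a then a else 0) = a * ecount m E l a"
        unfolding ec sum_distrib_left by (intro sum.cong) auto
    qed
    also have "\<dots> = (\<Sum>a<m. 3 * a)" using three by (intro sum.cong) auto
    finally show ?thesis by (simp add: sum_distrib_left)
  qed
  obtain q where q: "m = 2 * q" using ev by blast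
  have oq: "odd q"
  proof
    assume "even q"
    then obtain r where "q = 2 * r" by blast
    then have "m = 4 * r" using q by simp
    then show False using n4 by simp
  qed
  have "2 * (\<Sum>a<m. a) + m = m * m" by (rule twice_gauss0)
  then have "2 * ((\<Sum>a<m. a) + q) = 2 * (2 * (q * q))" unfolding q by (simp add: algebra_simps)
  then have "(\<Sum>a<m. a) + q = 2 * (q * q)" by (simp only: mult_cancel1) simp
  then have "even ((\<Sum>a<m. a) + q)" by simp
  then have "odd (\<Sum>a<m. a)" using oq by simp
  then have odd1: "odd (\<Sum>e\<in>E. f e)" using weighted by simp
  have "(\<Sum>e\<in>E. f e) mod 2 = (\<Sum>e\<in>E. f e mod 2) mod 2" by (simp add: mod_sum_eq)
  also have "(\<Sum>e\<in>E. f e mod 2) = (\<Sum>e\<in>E. (\<Sum>v\<in>e. l v) mod 2)"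
    unfolding f_def edge_label_def using ev by (intro sum.cong refl) (simp add: mod_mod_cancel)
  also have "(\<Sum>e\<in>E. (\<Sum>v\<in>e. l v) mod 2) mod 2 = (\<Sum>e\<in>E. (\<Sum>v\<in>e. l v)) mod 2" by (simp add: mod_sum_eq)
  also have "(\<Sum>e\<in>E. (\<Sum>v\<in>e. l v)) = (\<Sum>k<m. 2 * (l 0 + l (2*k+1) + l (2*k+2)))"
    unfolding Em[symmetric] sum_E_add E_0 by (simp only: sum.empty add_0_left, intro sum.cong refl) simp
  finally have X: "(\<Sum>e\<in>E. f e) mod 2 = (\<Sum>k<m. 2 * (l 0 + l (2*k+1) + l (2*k+2))) mod 2" .
  have "even (\<Sum>k<m. 2 * (l 0 + l (2*k+1) + l (2*k+2)))" by (rule dvd_sum) simp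
  then have "even (\<Sum>e\<in>E. f e)" using X by (simp add: even_iff_mod_2_eq_zero)
  then show False using odd1 by simp
qed

theorem theorem8p3:
  fixes m :: nat
  assumes "m \<ge> 1"
  shows "(odd m \<longrightarrow> friendship_Zm_cordial m m \<and>
            ((\<forall>n. friendship_Zm_cordial m n) \<longleftrightarrow> (\<forall>n\<in>{1..m-1}. friendship_Zm_cordial m n)))
       \<and> (even m \<longrightarrow> friendship_Zm_cordial m (2*m) \<and>
            ((\<forall>n. friendship_Zm_cordial m n) \<longleftrightarrow> (\<forall>n\<in>{1..2*m-1}. friendship_Zm_cordial m n)))
       \<and> (even m \<and> \<not> 4 dvd m \<longrightarrow> \<not> friendship_Zm_cordial m m)"
proof (intro conjI impI)
  have F0': "friendship_Zm_cordial m 0" using F0 assms .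
  show "\<not> friendship_Zm_cordial m m" if "even m \<and> \<not> 4 dvd m" using partC assms that by blast
  show "friendship_Zm_cordial m m" if "odd m" using ext_odd[OF that F0'] by simp
  show "friendship_Zm_cordial m (2*m)" if "even m" using ext_all[OF assms F0'] by simp
  show "(\<forall>n. friendship_Zm_cordial m n) \<longleftrightarrow> (\<forall>n\<in>{1..m-1}. friendship_Zm_cordial m n)" if o: "odd m"
  proof
    assume "\<forall>n\<in>{1..m-1}. friendship_Zm_cordial m n"
    then show "\<forall>n. friendship_Zm_cordial m n"
      using periodic[of m "friendship_Zm_cordial m"] assms F0' ext_odd[OF o] by blast
  qed simp
  show "(\<forall>n. friendship_Zm_cordial m n) \<longleftrightarrow> (\<forall>n\<in>{1..2*m-1}. friendship_Zm_cordial m n)"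
  proof
    assume "\<forall>n\<in>{1..2*m-1}. friendship_Zm_cordial m n"
    moreover have "2*m \<ge> 1" using assms by simp
    ultimately show "\<forall>n. friendship_Zm_cordial m n"
      using periodic[of "2*m" "friendship_Zm_cordial m"] F0' ext_all[OF assms] by blast
  qed simp
qed

end
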